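(* Let $k\geq2$ be an integer. The function $\psi_k(x)$ is strictly decreasing on $x>k$.
   Context: $f_t(\lambda)=e^{-\lambda}\sum_{i\geq t}\lambda^i/i!$. For $x>k$, let $\lambda=\lambda(x)>0$ be the unique positive root of $\lambda f_{k-1}(\lambda)=xf_k(\lambda)$, and define $\psi_k(x)=\frac{e^{-\lambda}\lambda^{k-1}}{f_{k-1}(\lambda)\,(k-1)!}$. *)

theory Defs
  imports "HOL-Analysis.Analysis"
begin

definition poisson_tail :: "nat \<Rightarrow> real \<Rightarrow> real" where
  "poisson_tail t lam = exp (- lam) * (\<Sum>i. if t \<le> i then lam ^ i / fact i else 0)"

definition lam_root :: "nat \<Rightarrow> real \<Rightarrow> real" where
  "lam_root k x = (THE lam. lam > 0 \<and> lam * poisson_tail (k - 1) lam = x * poisson_tail k lam)"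

definition psi :: "nat \<Rightarrow> real \<Rightarrow> real" where
  "psi k x = (let lam = lam_root k x in
     exp (- lam) * lam ^ (k - 1) / (poisson_tail (k - 1) lam * fact (k - 1)))"

end

theory Submission
  imports Defs
begin

definition St :: "nat \<Rightarrow> real \<Rightarrow> real" where
  "St t l = (\<Sum>i. if t \<le> i then l ^ i / fact i else 0)"

lemma pt_eq: "poisson_tail t l = exp (- l) * St t l"
  by (simp add: poisson_tail_def St_def)

lemma St_sums: "(\<lambda>i. if t \<le> i then (l::real) ^ i / fact i else 0) sums (exp l - (\<Sum>i<t. l ^ i / fact i))"
proof -
  have e: "(\<lambda>i. l ^ i / fact i) sums exp l"
    proof -
    have "(\<lambda>n. l ^ n /\<^sub>R fact n) = (\<lambda>i. l ^ i / fact i)" by (auto simp: fun_eq_iff field_simps)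
    then show ?thesis using exp_converges[of l] by metis
  qed
  have f: "(\<lambda>i. if i < t then l ^ i / fact i else 0) sums (\<Sum>i<t. l ^ i / fact i)"
  proof -
    have "(\<lambda>i. if i < t then l ^ i / fact i else 0) sums (\<Sum>i<t. (if i < t then l ^ i / fact i else 0))"
      by (rule sums_finite) auto
    then show ?thesis by simp
  qed
  have "(\<lambda>i. l ^ i / fact i - (if i < t then l ^ i / fact i else 0)) sums (exp l - (\<Sum>i<t. l ^ i / fact i))"
    by (rule sums_diff[OF e f])
  moreover have "(\<lambda>i. l ^ i / fact i - (if i < t then l ^ i / fact i else 0)) = (\<lambda>i. if t \<le> i then l ^ i / fact i else 0)"
    by (auto simp: fun_eq_iff)
  ultimately show ?thesis by simp
qed

lemma St_eq: "St t l = exp l - (\<Sum>i<t. l ^ i / fact i)"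
  unfolding St_def using St_sums sums_unique by metis

lemma St_summable: "summable (\<lambda>i. if t \<le> i then (l::real) ^ i / fact i else (0::real))"
  using St_sums sums_summable by blast

lemma St_pos: assumes "0 < l" shows "0 < St t l"
  unfolding St_def
  by (rule suminf_pos2[OF St_summable, where i=t]) (use assms in auto)

lemma St_ge: assumes "0 \<le> l" shows "l ^ t / fact t \<le> St t l"
proof -
  have "sum (\<lambda>i. if t \<le> i then l ^ i / fact i else 0) {t} \<le> St t l"
    unfolding St_def by (rule sum_le_suminf[OF St_summable]) (use assms in auto)
  then show ?thesis by simp
qed

lemma St_pred: assumes "1 \<le> k" shows "St (k - 1) l = l ^ (k - 1) / fact (k - 1) + St k l"
proof -
  obtain j where k: "k = Suc j" using assms by (cases k) auto
  show ?thesis by (simp add: St_eq k)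
qed

lemma N_sums: assumes "1 \<le> k"
  shows "(\<lambda>m. if k \<le> m then real m * l ^ m / fact m else 0) sums (l * St (k - 1) l)"
proof -
  let ?f = "\<lambda>m. if k \<le> m then real m * l ^ m / fact m else 0"
  have "(\<lambda>i. l * (if k - 1 \<le> i then l ^ i / fact i else 0)) sums (l * St (k - 1) l)"
    unfolding St_def by (rule sums_mult[OF summable_sums[OF St_summable]])
  moreover have "(\<lambda>i. ?f (Suc i)) = (\<lambda>i. l * (if k - 1 \<le> i then l ^ i / fact i else 0))"
  proof
    fix i
    have "real (Suc i) * l ^ Suc i / fact (Suc i) = l * (l ^ i / fact i)"
      by (simp add: fact_Suc del: of_nat_Suc)
    then show "?f (Suc i) = l * (if k - 1 \<le> i then l ^ i / fact i else 0)"
      using assms by auto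
  qed
  ultimately have "(\<lambda>i. ?f (Suc i)) sums (l * St (k - 1) l)" by simp
  then have "?f sums (l * St (k - 1) l + ?f 0)" by (rule iffD1[OF sums_Suc_iff])
  moreover have "?f 0 = 0" using assms by simp
  ultimately show ?thesis by simp
qed

lemma pow_cross: assumes "0 < l" "l < m" "i \<le> (j::nat)" shows "m ^ i * l ^ j \<le> m ^ j * (l::real) ^ i"
proof -
  obtain d where j: "j = i + d" using assms le_Suc_ex by blast
  have "l ^ d \<le> m ^ d" using assms by (intro power_mono) auto
  then have "m ^ i * l ^ i * l ^ d \<le> m ^ i * l ^ i * m ^ d"
    using assms by (intro mult_left_mono) auto
  then show ?thesis by (simp add: j power_add algebra_simps)
qed

lemma pow_cross_strict: assumes "0 < l" "l < m" shows "m ^ k * l ^ Suc k < m ^ Suc k * (l::real) ^ k"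
proof -
  have "0 < m ^ k * l ^ k" using assms by simp
  then have "m ^ k * l ^ k * l < m ^ k * l ^ k * m" using assms by simp
  then show ?thesis by (simp add: algebra_simps)
qed


lemma pair_nonneg: assumes "0 < l" "l < (m::real)" "0 \<le> a" "0 \<le> b"
  shows "0 \<le> (real i - real j) * a * b * (m ^ i * l ^ j - m ^ j * l ^ i)"
proof (cases "i \<le> j")
  case True
  then have "m ^ i * l ^ j - m ^ j * l ^ i \<le> 0" using pow_cross[OF assms(1,2) True] by simp
  moreover have "real i - real j \<le> 0" using True by simp
  ultimately have "0 \<le> (real i - real j) * (m ^ i * l ^ j - m ^ j * l ^ i)" by (simp add: mult_nonpos_nonpos)
  then have "0 \<le> (a * b) * ((real i - real j) * (m ^ i * l ^ j - m ^ j * l ^ i))" using assms by simp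
  then show ?thesis by (simp add: algebra_simps)
next
  case False
  then have "j \<le> i" by simp
  then have "0 \<le> m ^ i * l ^ j - m ^ j * l ^ i" using pow_cross[OF assms(1,2)] by simp
  moreover have "0 \<le> real i - real j" using False by simp
  ultimately show ?thesis using assms by simp
qed

lemma dsum_key:
  fixes c :: "nat \<Rightarrow> real"
  assumes c: "\<And>i. 0 \<le> c i" and "Suc k < K" and l: "0 < l" "l < m"
  shows "c k * c (Suc k) * (m ^ Suc k * l ^ k - m ^ k * l ^ Suc k) \<le>
    (\<Sum>i<K. real i * c i * m ^ i) * (\<Sum>j<K. c j * l ^ j) - (\<Sum>i<K. real i * c i * l ^ i) * (\<Sum>j<K. c j * m ^ j)"
proof -
  define w where "w i j = (real i - real j) * c i * c j * (m ^ i * l ^ j)" for i j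
  define v where "v i j = (real i - real j) * c i * c j * (m ^ i * l ^ j - m ^ j * l ^ i)" for i j
  have A: "(\<Sum>i<K. real i * c i * m ^ i) * (\<Sum>j<K. c j * l ^ j) = (\<Sum>i<K. \<Sum>j<K. real i * c i * m ^ i * (c j * l ^ j))"
    by (rule sum_product)
  have B: "(\<Sum>i<K. real i * c i * l ^ i) * (\<Sum>j<K. c j * m ^ j) = (\<Sum>i<K. \<Sum>j<K. real i * c i * l ^ i * (c j * m ^ j))"
    by (rule sum_product)
  also have "\<dots> = (\<Sum>j<K. \<Sum>i<K. real i * c i * l ^ i * (c j * m ^ j))"
    by (rule sum.swap)
  finally have B': "(\<Sum>i<K. real i * c i * l ^ i) * (\<Sum>j<K. c j * m ^ j) = (\<Sum>i<K. \<Sum>j<K. real j * c j * l ^ j * (c i * m ^ i))" .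
  have L1: "(\<Sum>i<K. real i * c i * m ^ i) * (\<Sum>j<K. c j * l ^ j) - (\<Sum>i<K. real i * c i * l ^ i) * (\<Sum>j<K. c j * m ^ j)
     = (\<Sum>i<K. \<Sum>j<K. w i j)"
    unfolding A B' w_def by (simp add: sum_subtractf[symmetric] algebra_simps)
  have S2: "(\<Sum>i<K. \<Sum>j<K. w i j) = (\<Sum>i<K. \<Sum>j<K. w j i)" by (rule sum.swap)
  have "(\<Sum>i<K. \<Sum>j<K. v i j) = (\<Sum>i<K. \<Sum>j<K. w i j + w j i)"
    by (intro sum.cong refl) (simp add: v_def w_def algebra_simps)
  also have "\<dots> = (\<Sum>i<K. \<Sum>j<K. w i j) + (\<Sum>i<K. \<Sum>j<K. w j i)"
    by (simp add: sum.distrib)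
  finally have L2: "2 * (\<Sum>i<K. \<Sum>j<K. w i j) = (\<Sum>i<K. \<Sum>j<K. v i j)"
    using S2 by simp
  have "(\<Sum>i<K. \<Sum>j<K. v i j) = (\<Sum>p\<in>{..<K} \<times> {..<K}. v (fst p) (snd p))"
    by (simp add: sum.cartesian_product case_prod_beta)
  also have "\<dots> \<ge> (\<Sum>p\<in>{(Suc k, k), (k, Suc k)}. v (fst p) (snd p))"
    by (rule sum_mono2) (use assms in \<open>auto simp: v_def intro!: pair_nonneg\<close>)
  finally have "(\<Sum>p\<in>{(Suc k, k), (k, Suc k)}. v (fst p) (snd p)) \<le> (\<Sum>i<K. \<Sum>j<K. v i j)" .
  moreover have "(\<Sum>p\<in>{(Suc k, k), (k, Suc k)}. v (fst p) (snd p)) = 2 * (c k * c (Suc k) * (m ^ Suc k * l ^ k - m ^ k * l ^ Suc k))"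
    by (simp add: v_def algebra_simps)
  ultimately show ?thesis using L1 L2 by linarith
qed


lemma G_mono:
  assumes k: "1 \<le> k" and l: "0 < l" "l < m"
  shows "l * St (k - 1) l * St k m < m * St (k - 1) m * St k l"
proof -
  define c where "c i = (if k \<le> i then 1 / fact i else (0::real))" for i
  have c0: "\<And>i. 0 \<le> c i" by (simp add: c_def)
  have N: "(\<lambda>n. \<Sum>i<n. real i * c i * x ^ i) \<longlonglongrightarrow> x * St (k - 1) x" for x
  proof -
    have "(\<lambda>i. real i * c i * x ^ i) = (\<lambda>i. if k \<le> i then real i * x ^ i / fact i else 0)"
      by (auto simp: fun_eq_iff c_def)
    then show ?thesis using N_sums[OF k, of x] unfolding sums_def by metis
  qed
  have D: "(\<lambda>n. \<Sum>i<n. c i * x ^ i) \<longlonglongrightarrow> St k x" for x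
  proof -
    have "(\<lambda>i. c i * x ^ i) = (\<lambda>i. if k \<le> i then x ^ i / fact i else 0)"
      by (auto simp: fun_eq_iff c_def)
    then show ?thesis using summable_LIMSEQ[OF St_summable[of k x]] unfolding St_def by metis
  qed
  define \<delta> where "\<delta> = c k * c (Suc k) * (m ^ Suc k * l ^ k - m ^ k * l ^ Suc k)"
  have "0 < c k * c (Suc k)" by (simp add: c_def)
  moreover have "0 < m ^ Suc k * l ^ k - m ^ k * l ^ Suc k" using pow_cross_strict[OF l] by simp
  ultimately have dpos: "0 < \<delta>" unfolding \<delta>_def by simp
  have lim: "(\<lambda>K. (\<Sum>i<K. real i * c i * m ^ i) * (\<Sum>j<K. c j * l ^ j) - (\<Sum>i<K. real i * c i * l ^ i) * (\<Sum>j<K. c j * m ^ j))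
     \<longlonglongrightarrow> m * St (k - 1) m * St k l - l * St (k - 1) l * St k m"
    by (intro tendsto_intros N D)
  have ev: "eventually (\<lambda>K. \<delta> \<le> (\<Sum>i<K. real i * c i * m ^ i) * (\<Sum>j<K. c j * l ^ j) - (\<Sum>i<K. real i * c i * l ^ i) * (\<Sum>j<K. c j * m ^ j)) sequentially"
    unfolding \<delta>_def
    using eventually_gt_at_top[of "Suc k"] by eventually_elim (rule dsum_key[OF c0 _ l])
  have "\<delta> \<le> m * St (k - 1) m * St k l - l * St (k - 1) l * St k m"
    by (rule tendsto_lowerbound[OF lim ev]) simp
  then show ?thesis using dpos by linarith
qed


lemma St_ratio:
  assumes l: "0 < l" "l < m"
  shows "St k l * m ^ k \<le> St k m * l ^ k"
proof -
  have "(\<Sum>i. (if k \<le> i then l ^ i / fact i else 0) * m ^ k) \<le> (\<Sum>i. (if k \<le> i then m ^ i / fact i else 0) * l ^ k)"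
  proof (rule suminf_le)
    fix i
    show "(if k \<le> i then l ^ i / fact i else 0) * m ^ k \<le> (if k \<le> i then m ^ i / fact i else 0) * l ^ k"
    proof (cases "k \<le> i")
      case True
      have "m ^ k * l ^ i \<le> m ^ i * l ^ k" by (rule pow_cross[OF l True])
      then have "m ^ k * l ^ i / fact i \<le> m ^ i * l ^ k / fact i" by (simp add: divide_right_mono)
      then show ?thesis using True by (simp add: algebra_simps)
    qed simp
  qed (intro summable_mult2 St_summable)+
  then show ?thesis unfolding St_def by (simp add: suminf_mult2[OF St_summable])
qed

lemma eq_iff: "l * poisson_tail (k - 1) l = x * poisson_tail k l \<longleftrightarrow> l * St (k - 1) l = x * St k l"
  by (simp add: pt_eq)

lemma root_ex1:
  assumes k: "1 \<le> k" and x: "real k < x"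
  shows "\<exists>!l. l > 0 \<and> l * poisson_tail (k - 1) l = x * poisson_tail k l"
proof -
  define H where "H l = l * St (k - 1) l - x * St k l" for l
  have Hq: "H l = l ^ k / fact (k - 1) + (l - x) * St k l" for l
  proof -
    have "l * l ^ (k - 1) = l ^ k" using k by (cases k) auto
    then show ?thesis unfolding H_def St_pred[OF k] by (simp add: algebra_simps)
  qed
  define l1 where "l1 = (x - real k) / 2"
  have l1: "0 < l1" "l1 < x" "l1 + real k < x" using x by (auto simp: l1_def field_simps)
  have fk: "fact k = real k * fact (k - 1)" using k by (cases k) auto
  have "l1 ^ k / fact (k - 1) = real k * (l1 ^ k / fact k)" using k by (simp add: fk)
  also have "\<dots> \<le> real k * St k l1" using St_ge[of l1 k] l1 by (intro mult_left_mono) auto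
  finally have "H l1 \<le> (real k + l1 - x) * St k l1" unfolding Hq by (simp add: algebra_simps)
  also have "\<dots> < 0" using l1 St_pos[of l1 k] by (simp add: mult_neg_pos)
  finally have H1: "H l1 \<le> 0" by simp
  have H2: "0 \<le> H x" unfolding Hq using l1 by simp
  have "H = (\<lambda>l. l * (exp l - (\<Sum>i<k - 1. l ^ i / fact i)) - x * (exp l - (\<Sum>i<k. l ^ i / fact i)))"
    by (simp add: fun_eq_iff H_def St_eq)
  then have cont: "continuous_on {l1..x} H" by (simp add: continuous_intros)
  obtain a where a: "l1 \<le> a" "a \<le> x" "H a = 0" using IVT'[of H l1 0 x, OF H1 H2 _ cont] l1 by auto
  have apos: "0 < a" using a l1 by simp
  show ?thesis
  proof (rule ex1I[of _ a])
    show "0 < a \<and> a * poisson_tail (k - 1) a = x * poisson_tail k a"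
      using apos a(3) eq_iff[of a k x] by (simp add: H_def)
  next
    fix b assume b: "0 < b \<and> b * poisson_tail (k - 1) b = x * poisson_tail k b"
    then have hb: "b * St (k - 1) b = x * St k b" using eq_iff[of b k x] by simp
    have ha: "a * St (k - 1) a = x * St k a" using a(3) by (simp add: H_def)
    have Sa: "0 < St k a" "0 < St k b" using apos b St_pos by auto
    show "b = a"
    proof (rule ccontr)
      assume "b \<noteq> a"
      then consider "b < a" | "a < b" by linarith
      then show False
      proof cases
        case 1
        have "b * St (k - 1) b * St k a < a * St (k - 1) a * St k b" using G_mono[OF k] b 1 by blast
        moreover have "b * St (k - 1) b * St k a = x * (St k a * St k b)" unfolding hb by (simp add: algebra_simps)
        moreover have "a * St (k - 1) a * St k b = x * (St k a * St k b)" unfolding ha by (simp add: algebra_simps)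
        ultimately show False by linarith
      next
        case 2
        have "a * St (k - 1) a * St k b < b * St (k - 1) b * St k a" using G_mono[OF k] apos 2 by blast
        moreover have "b * St (k - 1) b * St k a = x * (St k a * St k b)" unfolding hb by (simp add: algebra_simps)
        moreover have "a * St (k - 1) a * St k b = x * (St k a * St k b)" unfolding ha by (simp add: algebra_simps)
        ultimately show False by linarith
      qed
    qed
  qed
qed

lemma root_props:
  assumes k: "1 \<le> k" and x: "real k < x"
  shows "0 < lam_root k x" "lam_root k x * St (k - 1) (lam_root k x) = x * St k (lam_root k x)"
proof -
  have "lam_root k x > 0 \<and> lam_root k x * poisson_tail (k - 1) (lam_root k x) = x * poisson_tail k (lam_root k x)"
    unfolding lam_root_def by (rule theI'[OF root_ex1[OF k x]])
  then show "0 < lam_root k x" "lam_root k x * St (k - 1) (lam_root k x) = x * St k (lam_root k x)"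
    using eq_iff[of "lam_root k x" k x] by auto
qed

lemma root_mono:
  assumes k: "1 \<le> k" and x: "real k < x" and xy: "x < y"
  shows "lam_root k x < lam_root k y"
proof (rule ccontr)
  define a where "a = lam_root k x"
  define b where "b = lam_root k y"
  have y: "real k < y" using x xy by simp
  have a: "0 < a" "a * St (k - 1) a = x * St k a" using root_props[OF k x] by (auto simp: a_def)
  have b: "0 < b" "b * St (k - 1) b = y * St k b" using root_props[OF k y] by (auto simp: b_def)
  have Sa: "0 < St k a" "0 < St k b" using a b St_pos by auto
  assume "\<not> lam_root k x < lam_root k y"
  then consider "b = a" | "b < a" unfolding a_def[symmetric] b_def[symmetric] by linarith
  then show False
  proof cases
    case 1
    then have "x * St k a = y * St k a" using a b by simp
    then show False using Sa xy by simp
  next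
    case 2
    have "b * St (k - 1) b * St k a < a * St (k - 1) a * St k b" using G_mono[OF k] b 2 by blast
    moreover have "b * St (k - 1) b * St k a = y * (St k a * St k b)" unfolding b(2) by (simp add: algebra_simps)
    moreover have "a * St (k - 1) a * St k b = x * (St k a * St k b)" unfolding a(2) by (simp add: algebra_simps)
    ultimately have "y * (St k a * St k b) < x * (St k a * St k b)" by linarith
    then show False using Sa xy mult_pos_pos[OF Sa] by (simp add: mult_less_cancel_right)
  qed
qed

lemma psi_eq:
  assumes k: "1 \<le> k" and x: "real k < x"
  shows "psi k x = lam_root k x ^ (k - 1) / (lam_root k x ^ (k - 1) + fact (k - 1) * St k (lam_root k x))"
proof -
  define a where "a = lam_root k x"
  have "psi k x = exp (- a) * a ^ (k - 1) / (exp (- a) * St (k - 1) a * fact (k - 1))"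
    by (simp add: psi_def pt_eq a_def Let_def)
  also have "\<dots> = a ^ (k - 1) / (St (k - 1) a * fact (k - 1))" by simp
  also have "\<dots> = a ^ (k - 1) / (a ^ (k - 1) + fact (k - 1) * St k a)"
    unfolding St_pred[OF k] by (simp add: algebra_simps)
  finally show ?thesis by (simp add: a_def)
qed

theorem lemma51:
  fixes k :: nat
  assumes "k \<ge> 2"
  shows "strict_antimono_on {real k<..} (psi k)"
proof (rule monotone_onI)
  have k: "1 \<le> k" using assms by simp
  fix x y assume xA: "x \<in> {real k<..}" and yA: "y \<in> {real k<..}" and xy: "x < y"
  have x: "real k < x" and y: "real k < y" using xA yA by auto
  define a where "a = lam_root k x"
  define b where "b = lam_root k y"
  have a: "0 < a" using root_props[OF k x] by (simp add: a_def)
  have ab: "a < b" using root_mono[OF k x xy] by (simp add: a_def b_def)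
  define F where "F = (fact (k - 1) :: real)"
  have F: "0 < F" by (simp add: F_def)
  define A where "A = St k a"
  define B where "B = St k b"
  have AB: "0 < A" "0 < B" using St_pos a ab by (auto simp: A_def B_def)
  have r: "A * b ^ k \<le> B * a ^ k" using St_ratio[OF a ab, of k] by (simp add: A_def B_def)
  have bk: "b ^ k = b ^ (k - 1) * b" "a ^ k = a ^ (k - 1) * a" using k by (cases k; simp)+
  have "A * b ^ (k - 1) * b \<le> B * a ^ (k - 1) * a" using r bk by (simp add: algebra_simps)
  also have "\<dots> < B * a ^ (k - 1) * b" using ab a AB by (intro mult_strict_left_mono) auto
  finally have key: "A * b ^ (k - 1) < B * a ^ (k - 1)" using a ab by (simp add: mult_less_cancel_right)
  have pa: "0 < a ^ (k - 1)" "0 < b ^ (k - 1)" using a ab by auto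
  have "b ^ (k - 1) / (b ^ (k - 1) + F * B) < a ^ (k - 1) / (a ^ (k - 1) + F * A)"
  proof -
    have d: "0 < b ^ (k - 1) + F * B" "0 < a ^ (k - 1) + F * A" using pa F AB by (auto intro: add_pos_pos)
    have "b ^ (k - 1) * (a ^ (k - 1) + F * A) < a ^ (k - 1) * (b ^ (k - 1) + F * B)"
      using key F by (simp add: algebra_simps)
    then show ?thesis using d by (simp add: divide_simps)
  qed
  then show "psi k y < psi k x"
    using psi_eq[OF k x] psi_eq[OF k y] by (simp add: a_def b_def A_def B_def F_def)
qed

end
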